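(* Let $n$ be a nonnegative integer and let $a,b,c\in\mathbb{C}$ be such that all hypergeometric series and quotients below are defined (no lower parameter is zero or a negative integer). Then \[ {}_4F_3\!\left(\left.{-n,\frac{a}{2},\frac{a+1}{2},b \atop a,1+a-c,c}\right| 4\right) =\frac{(-1)^n(b)_n}{(1+a-c)_n}\, {}_4F_3\!\left(\left.{-n,\frac{c-b-n}{2},\frac{c-b-n+1}{2},c-a-n \atop c-b-n,1-b-n,c}\right| 4\right). \]
   Context: For $a\in\mathbb{C}$, $(a)_0=1$ and $(a)_k=a(a+1)\cdots(a+k-1)$ for $k\ge1$. The hypergeometric series is ${}_rF_s\!\left(\left.{\alpha_1,\ldots,\alpha_r\atop \beta_1,\ldots,\beta_s}\right|z\right)=\sum_{k\ge0}\frac{(\alpha_1)_k\cdots(\alpha_r)_k}{k!(\beta_1)_k\cdots(\beta_s)_k}z^k$, with no lower parameter zero or a negative integer; when an upper parameter is $-n$ ($n$ a nonnegative integer) it is a finite sum over $0\le k\le n$. *)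

theory Defs
  imports Complex_Main
begin

text \<open>Terminating hypergeometric series whose first upper parameter is \<open>-n\<close>:
  upper parameters \<open>-n, as\<close>, lower parameters \<open>bs\<close>, argument \<open>z\<close>;
  it is the finite sum over \<open>0 \<le> k \<le> n\<close> (all further terms vanish since \<open>(-n)_k = 0\<close> for \<open>k > n\<close>).\<close>
definition hypergeom_term :: "nat \<Rightarrow> complex list \<Rightarrow> complex list \<Rightarrow> complex \<Rightarrow> complex" where
  "hypergeom_term n as bs z =
     (\<Sum>k\<le>n. pochhammer (- of_nat n) k * prod_list (map (\<lambda>a. pochhammer a k) as)
              / (fact k * prod_list (map (\<lambda>b. pochhammer b k) bs)) * z ^ k)"

definition not_nonpos_int :: "complex \<Rightarrow> bool" where
  "not_nonpos_int x \<longleftrightarrow> (\<forall>m::nat. x \<noteq> - of_nat m)"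

end

theory Submission
  imports Defs "HOL-Computational_Algebra.Formal_Power_Series"
begin

lemma swap_tri:
  fixes f :: "nat \<Rightarrow> nat \<Rightarrow> complex"
  shows "(\<Sum>k\<le>n. \<Sum>j\<le>k. f j (k - j)) = (\<Sum>j\<le>n. \<Sum>m\<le>n-j. f j m)"
proof -
  have "(\<Sum>k\<le>n. \<Sum>j\<le>k. f j (k - j)) = (\<Sum>(i,j)\<in>{(i,j). i+j \<le> n}. f i j)"
    by (rule sum.triangle_reindex_eq[symmetric])
  also have "{(i,j). i+j \<le> n} = Sigma {..n} (\<lambda>i. {..n-i})" by auto
  also have "(\<Sum>(i,j)\<in>Sigma {..n} (\<lambda>i. {..n-i}). f i j) = (\<Sum>j\<le>n. \<Sum>m\<le>n-j. f j m)"
    by (rule sum.Sigma[symmetric]) auto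
  finally show ?thesis .
qed

lemma nz: "not_nonpos_int y \<Longrightarrow> pochhammer y k \<noteq> 0"
  unfolding not_nonpos_int_def pochhammer_eq_0_iff by auto

lemma poch_negnat:
  assumes "j \<le> k"
  shows "pochhammer (- of_nat k :: complex) j * fact (k - j) = (-1)^j * fact k"
  using assms
proof (induction j)
  case 0 then show ?case by simp
next
  case (Suc j)
  have "fact (k - j) = (of_nat (k - j) :: complex) * fact (k - Suc j)"
    using Suc.prems by (metis Suc_diff_le diff_Suc_Suc fact_Suc minus_nat.diff_0 of_nat_fact Suc_diff_Suc of_nat_mult)
  have p: "pochhammer (- of_nat k :: complex) (Suc j) = pochhammer (- of_nat k) j * (- of_nat k + of_nat j)"
    by (simp add: pochhammer_rec')
  have e: "(- of_nat k + of_nat j :: complex) = - of_nat (k - j)" using Suc.prems by (simp add: of_nat_diff)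
  have "pochhammer (- of_nat k :: complex) (Suc j) * fact (k - Suc j) = - (pochhammer (- of_nat k) j * fact (k - j))"
    unfolding p e \<open>fact (k - j) = _\<close> by simp
  also have "\<dots> = (-1)^Suc j * fact k" using Suc by simp
  finally show ?case .
qed

lemma vdm:
  assumes "not_nonpos_int c"
  shows "(\<Sum>j\<le>k. pochhammer a' j * pochhammer (- of_nat k) j / (fact j * pochhammer c j))
     = pochhammer (c - a') k / pochhammer (c::complex) k"
  using Vandermonde_pochhammer[of k c a'] assms unfolding not_nonpos_int_def
  by (simp add: atLeast0AtMost)


lemma t3:
  fixes x :: complex
  assumes jk: "j \<le> k" and nx: "not_nonpos_int x"
  shows "pochhammer (1 - x - of_nat k) j * pochhammer (- of_nat k) j / (fact k * pochhammer x k)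
       = 1 / (fact (k - j) * pochhammer x (k - j))"
proof -
  have m1: "pochhammer (1 - x - of_nat k) j = (-1)^j * pochhammer (x + of_nat (k - j)) j"
    using pochhammer_minus[of "x + of_nat k - 1" j] jk by (simp add: of_nat_diff algebra_simps)
  have m2: "pochhammer x k = pochhammer x (k - j) * pochhammer (x + of_nat (k - j)) j"
    using pochhammer_product[of "k - j" k x] jk by simp
  have m3: "pochhammer (- of_nat k :: complex) j = (-1)^j * fact k / fact (k - j)"
    using poch_negnat[OF jk] by (simp add: field_simps)
  have nz1: "pochhammer x (k - j) \<noteq> 0" "pochhammer (x + of_nat (k - j)) j \<noteq> 0"
    using nz[OF nx, of k] m2 by auto
  have s: "((-1::complex)^j) * (-1)^j = 1" by (simp flip: power_mult_distrib)
  show ?thesis unfolding m1 m2 m3 using nz1 s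
    by (simp add: field_simps)
qed


lemma H:
  fixes n :: nat and a b c x :: complex
  assumes na: "not_nonpos_int a" and nx: "not_nonpos_int x" and nc: "not_nonpos_int c"
    and xd: "x = 1 + a - c"
  shows "hypergeom_term n [a/2, (a+1)/2, b] [a, x, c] 4 =
    (\<Sum>j\<le>n. pochhammer (- of_nat n) j * pochhammer b j * pochhammer (x - b - of_nat j) (n - j)
        / (fact j * pochhammer c j * pochhammer x (n - j)))"
proof -
  have d: "pochhammer (a/2) k * pochhammer ((a+1)/2) k * 4^k = pochhammer a k * pochhammer (a + of_nat k) k" for k
  proof -
    have "pochhammer a (2*k) = of_nat (2^(2*k)) * pochhammer (a/2) k * pochhammer (a/2+1/2) k"
      using pochhammer_double[of "a/2" k] by simp
    moreover have "pochhammer a (2*k) = pochhammer a k * pochhammer (a + of_nat k) k"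
      using pochhammer_product'[of a k k] by (simp add: mult_2)
    moreover have "(of_nat (2^(2*k)) :: complex) = 4^k" by (simp add: power_mult)
    moreover have "a/2+1/2 = (a+1)/2" by (simp add: add_divide_distrib)
    ultimately show ?thesis by (simp add: mult_ac)
  qed
  define f where "f j m = pochhammer (- of_nat n) (j+m) * pochhammer b (j+m)
      / (fact j * pochhammer c j * (fact m * pochhammer x m))" for j m
  have step1: "hypergeom_term n [a/2, (a+1)/2, b] [a, x, c] 4 =
     (\<Sum>k\<le>n. pochhammer (- of_nat n) k * pochhammer b k / (fact k * pochhammer x k)
         * (pochhammer (a + of_nat k) k / pochhammer c k))"
    unfolding hypergeom_term_def
  proof (rule sum.cong[OF refl])
    fix k assume "k \<in> {..n}"
    have "pochhammer a k \<noteq> 0" "pochhammer x k \<noteq> 0" "pochhammer c k \<noteq> 0"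
      using nz na nx nc by auto
    then show "pochhammer (- of_nat n) k * prod_list (map (\<lambda>a. pochhammer a k) [a/2, (a+1)/2, b])
        / (fact k * prod_list (map (\<lambda>b. pochhammer b k) [a, x, c])) * 4 ^ k =
      pochhammer (- of_nat n) k * pochhammer b k / (fact k * pochhammer x k)
         * (pochhammer (a + of_nat k) k / pochhammer c k)"
      using d[of k] by (simp add: field_simps)
  qed
  also have "\<dots> = (\<Sum>k\<le>n. \<Sum>j\<le>k. f j (k - j))"
  proof (rule sum.cong[OF refl])
    fix k assume "k \<in> {..n}"
    have v: "pochhammer (a + of_nat k) k / pochhammer c k =
      (\<Sum>j\<le>k. pochhammer (1 - x - of_nat k) j * pochhammer (- of_nat k) j / (fact j * pochhammer c j))"
    proof -
      have e: "c - (1 - x - of_nat k) = a + of_nat k" using xd by simp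
      show ?thesis using vdm[OF nc, of "1 - x - of_nat k" k] unfolding e by simp
    qed
    show "pochhammer (- of_nat n) k * pochhammer b k / (fact k * pochhammer x k)
         * (pochhammer (a + of_nat k) k / pochhammer c k) = (\<Sum>j\<le>k. f j (k - j))"
      unfolding v sum_distrib_left
    proof (rule sum.cong[OF refl])
      fix j assume "j \<in> {..k}"
      then have jk: "j \<le> k" by simp
      have "pochhammer (- of_nat n) k * pochhammer b k / (fact k * pochhammer x k) *
        (pochhammer (1 - x - of_nat k) j * pochhammer (- of_nat k) j / (fact j * pochhammer c j))
        = pochhammer (- of_nat n) k * pochhammer b k / (fact j * pochhammer c j) *
          (pochhammer (1 - x - of_nat k) j * pochhammer (- of_nat k) j / (fact k * pochhammer x k))"
        by (simp add: field_simps)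
      also have "\<dots> = pochhammer (- of_nat n) k * pochhammer b k / (fact j * pochhammer c j) *
          (1 / (fact (k - j) * pochhammer x (k - j)))"
        by (simp only: t3[OF jk nx])
      also have "\<dots> = f j (k - j)" unfolding f_def using jk by simp
      finally show "pochhammer (- of_nat n) k * pochhammer b k / (fact k * pochhammer x k) *
        (pochhammer (1 - x - of_nat k) j * pochhammer (- of_nat k) j / (fact j * pochhammer c j))
        = f j (k - j)" .
    qed
  qed
  also have "\<dots> = (\<Sum>j\<le>n. \<Sum>m\<le>n-j. f j m)" by (rule swap_tri)
  also have "\<dots> = (\<Sum>j\<le>n. pochhammer (- of_nat n) j * pochhammer b j * pochhammer (x - b - of_nat j) (n - j)
        / (fact j * pochhammer c j * pochhammer x (n - j)))"
  proof (rule sum.cong[OF refl])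
    fix j assume "j \<in> {..n}"
    then have jn: "j \<le> n" by simp
    have e: "- of_nat n + of_nat j = (- of_nat (n - j) :: complex)" using jn by (simp add: of_nat_diff)
    have "(\<Sum>m\<le>n-j. f j m) = (\<Sum>m\<le>n-j. pochhammer (- of_nat n) j * pochhammer b j / (fact j * pochhammer c j)
        * (pochhammer (b + of_nat j) m * pochhammer (- of_nat (n - j)) m / (fact m * pochhammer x m)))"
      unfolding f_def pochhammer_product' e by (simp add: field_simps)
    also have "\<dots> = pochhammer (- of_nat n) j * pochhammer b j / (fact j * pochhammer c j)
        * (pochhammer (x - (b + of_nat j)) (n - j) / pochhammer x (n - j))"
      by (simp only: sum_distrib_left[symmetric] vdm[OF nx])
    also have "\<dots> = pochhammer (- of_nat n) j * pochhammer b j * pochhammer (x - b - of_nat j) (n - j)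
        / (fact j * pochhammer c j * pochhammer x (n - j))"
      by (simp add: algebra_simps)
    finally show "(\<Sum>m\<le>n-j. f j m) = pochhammer (- of_nat n) j * pochhammer b j * pochhammer (x - b - of_nat j) (n - j)
        / (fact j * pochhammer c j * pochhammer x (n - j))" .
  qed
  finally show ?thesis .
qed


lemma K:
  fixes b x :: complex
  assumes jn: "j \<le> n" and nx: "not_nonpos_int x" and nb: "not_nonpos_int (1 - b - of_nat n)"
  shows "pochhammer b j / pochhammer x (n - j) =
    (-1)^n * pochhammer b n / pochhammer x n * (pochhammer (1 - x - of_nat n) j / pochhammer (1 - b - of_nat n) (n - j))"
proof -
  have m1: "pochhammer (1 - x - of_nat n) j = (-1)^j * pochhammer (x + of_nat (n - j)) j"
    using pochhammer_minus[of "x + of_nat n - 1" j] jn by (simp add: of_nat_diff algebra_simps)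
  have m2: "pochhammer x n = pochhammer x (n - j) * pochhammer (x + of_nat (n - j)) j"
    using pochhammer_product[of "n - j" n x] jn by simp
  have m3: "pochhammer (1 - b - of_nat n) (n - j) = (-1)^(n-j) * pochhammer (b + of_nat j) (n - j)"
    using pochhammer_minus[of "b + of_nat n - 1" "n - j"] jn by (simp add: of_nat_diff algebra_simps)
  have m4: "pochhammer b n = pochhammer b j * pochhammer (b + of_nat j) (n - j)"
    using pochhammer_product[of j n b] jn by simp
  have nz1: "pochhammer x (n - j) \<noteq> 0" "pochhammer (x + of_nat (n - j)) j \<noteq> 0"
    using nz[OF nx, of n] m2 by auto
  have nz2: "pochhammer (b + of_nat j) (n - j) \<noteq> 0" using nz[OF nb, of "n - j"] m3 by auto
  have s: "((-1::complex)^n) = (-1)^j * (-1)^(n-j)" using jn by (simp flip: power_add)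
  have s2: "((-1::complex)^j) * (-1)^j = 1" "((-1::complex)^(n-j)) * (-1)^(n-j) = 1"
    by (simp_all flip: power_mult_distrib)
  show ?thesis unfolding m1 m2 m3 m4 s using nz1 nz2 s2
    by (simp add: field_simps)
qed

theorem proposition3p3:
  fixes n :: nat and a b c :: complex
  assumes "not_nonpos_int a" and "not_nonpos_int (1 + a - c)" and "not_nonpos_int c"
    and "not_nonpos_int (c - b - of_nat n)" and "not_nonpos_int (1 - b - of_nat n)"
  shows "hypergeom_term n [a/2, (a+1)/2, b] [a, 1 + a - c, c] 4
       = (-1) ^ n * pochhammer b n / pochhammer (1 + a - c) n
         * hypergeom_term n [(c - b - of_nat n)/2, (c - b - of_nat n + 1)/2, c - a - of_nat n]
                            [c - b - of_nat n, 1 - b - of_nat n, c] 4"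
proof -
  define x where "x = 1 + a - c"
  have nx: "not_nonpos_int x" using assms(2) x_def by simp
  have L: "hypergeom_term n [a/2, (a+1)/2, b] [a, x, c] 4 =
    (\<Sum>j\<le>n. pochhammer (- of_nat n) j * pochhammer b j * pochhammer (x - b - of_nat j) (n - j)
        / (fact j * pochhammer c j * pochhammer x (n - j)))"
    by (rule H[OF assms(1) nx assms(3) x_def])
  have R: "hypergeom_term n [(c - b - of_nat n)/2, (c - b - of_nat n + 1)/2, c - a - of_nat n]
                            [c - b - of_nat n, 1 - b - of_nat n, c] 4 =
    (\<Sum>j\<le>n. pochhammer (- of_nat n) j * pochhammer (c - a - of_nat n) j
        * pochhammer ((1 - b - of_nat n) - (c - a - of_nat n) - of_nat j) (n - j)
        / (fact j * pochhammer c j * pochhammer (1 - b - of_nat n) (n - j)))"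
    by (rule H[OF assms(4) assms(5) assms(3)]) simp
  have e1: "c - a - of_nat n = 1 - x - of_nat n" unfolding x_def by simp
  have e2: "\<And>j. (1 - b - of_nat n) - (c - a - of_nat n) - of_nat j = x - b - of_nat j"
    unfolding x_def by simp
  show ?thesis
    unfolding x_def[symmetric] L R e2 unfolding e1 sum_distrib_left
  proof (rule sum.cong[OF refl])
    fix j assume "j \<in> {..n}"
    then have jn: "j \<le> n" by simp
    have "pochhammer (- of_nat n) j * pochhammer b j * pochhammer (x - b - of_nat j) (n - j)
        / (fact j * pochhammer c j * pochhammer x (n - j))
      = pochhammer (- of_nat n) j * pochhammer (x - b - of_nat j) (n - j) / (fact j * pochhammer c j)
        * (pochhammer b j / pochhammer x (n - j))" by simp
    also have "\<dots> = pochhammer (- of_nat n) j * pochhammer (x - b - of_nat j) (n - j) / (fact j * pochhammer c j)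
        * ((-1)^n * pochhammer b n / pochhammer x n * (pochhammer (1 - x - of_nat n) j / pochhammer (1 - b - of_nat n) (n - j)))"
      by (simp only: K[OF jn nx assms(5)])
    also have "\<dots> = (-1)^n * pochhammer b n / pochhammer x n *
      (pochhammer (- of_nat n) j * pochhammer (1 - x - of_nat n) j * pochhammer (x - b - of_nat j) (n - j) /
       (fact j * pochhammer c j * pochhammer (1 - b - of_nat n) (n - j)))" by (simp add: mult_ac)
    finally show "pochhammer (- of_nat n) j * pochhammer b j * pochhammer (x - b - of_nat j) (n - j)
        / (fact j * pochhammer c j * pochhammer x (n - j)) = (-1)^n * pochhammer b n / pochhammer x n *
      (pochhammer (- of_nat n) j * pochhammer (1 - x - of_nat n) j * pochhammer (x - b - of_nat j) (n - j) /
       (fact j * pochhammer c j * pochhammer (1 - b - of_nat n) (n - j)))" .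
  qed
qed

end
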